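(* Let $f,f_0\in\mathcal F$. Let $g$ and $\bar g_0$ be densities on $\mathcal X$, and let $g_0$ be a density on $\mathcal X$ such that $\eta\bar g_0(x)\ge g_0(x)$ for some constant $\eta>0$ and all $x\in\mathcal X$. Then $$d_h^2(f_0,f)\le4\eta\int\Big(\sqrt{f_0(y|x)\bar g_0(x)}-\sqrt{f(y|x)g(x)}\Big)^2\,dy\,dx.$$
   Context: $\mathcal Y\subset\mathbb R^{d_y}$ and $\mathcal X\subset\mathbb R^{d_x}$. $\mathcal F$ is the set of Borel measurable $f:\mathcal Y\times\mathcal X\to[0,\infty)$ with $\int f(y|x)\,dy=1$ for every $x$. For $f_1,f_2\in\mathcal F$, $d_h(f_1,f_2)=\big(\int(\sqrt{f_1(y|x)}-\sqrt{f_2(y|x)})^2g_0(x)\,dy\,dx\big)^{1/2}$. All densities are with respect to Lebesgue measure. *)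

theory Defs
  imports "HOL-Analysis.Analysis"
begin

text \<open>Conditional densities f(y|x) on Y \<times> X, represented as f y x.\<close>
definition cond_dens_class ::
  "('y::euclidean_space) set \<Rightarrow> ('x::euclidean_space) set \<Rightarrow> ('y \<Rightarrow> 'x \<Rightarrow> real) set" where
  "cond_dens_class Y X = {f.
      (\<lambda>(y, x). f y x) \<in> borel_measurable borel \<and>
      (\<forall>y\<in>Y. \<forall>x\<in>X. 0 \<le> f y x) \<and>
      (\<forall>x\<in>X. (\<integral>\<^sup>+ y. ennreal (f y x) * indicator Y y \<partial>lborel) = 1)}"

definition is_density_on :: "('x::euclidean_space) set \<Rightarrow> ('x \<Rightarrow> real) \<Rightarrow> bool" where
  "is_density_on X g \<longleftrightarrow> g \<in> borel_measurable borel \<and> (\<forall>x\<in>X. 0 \<le> g x) \<and>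
      (\<integral>\<^sup>+ x. ennreal (g x) * indicator X x \<partial>lborel) = 1"

definition hellinger_dist ::
  "('y::euclidean_space) set \<Rightarrow> ('x::euclidean_space) set \<Rightarrow> ('x \<Rightarrow> real) \<Rightarrow>
   ('y \<Rightarrow> 'x \<Rightarrow> real) \<Rightarrow> ('y \<Rightarrow> 'x \<Rightarrow> real) \<Rightarrow> real" where
  "hellinger_dist Y X g0 f1 f2 = sqrt (enn2real
     (\<integral>\<^sup>+ x. (\<integral>\<^sup>+ y. ennreal ((sqrt (f1 y x) - sqrt (f2 y x))\<^sup>2 * g0 x) * indicator Y y \<partial>lborel)
          * indicator X x \<partial>lborel))"

end

theory Submission imports Defs begin
lemma key:
  fixes a b u v :: real
  assumes "0\<le>a" "0\<le>b" "0\<le>u" "0\<le>v"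
  shows "a^2 * (u-v)^2 + 2 * b^2 * v^2 + 2 * a^2 * u^2 \<le> 4 * (a * u-b * v)^2 + 2 * b^2 * u^2 + 2 * a^2 * v^2"
proof -
  have "0 \<le> (a^2+2 * b^2) * (u-v)^2 + 4 * (a-b)^2 * u * v" using assms by simp
  thus ?thesis by (simp add: power2_eq_square algebra_simps)
qed

lemma meas: assumes "(\<lambda>(y,x). f y x) \<in> borel_measurable borel"
  shows "(\<lambda>y. (f::'y::euclidean_space\<Rightarrow>'x::euclidean_space\<Rightarrow>real) y x) \<in> borel_measurable lborel"
proof -
  have "(\<lambda>y. (y,x)) \<in> borel \<rightarrow>\<^sub>M (borel :: ('y \<times> 'x) measure)"
    by measurable
  from measurable_compose[OF this assms] show ?thesis by simp
qed

lemma inner: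
  fixes f f0 :: "'y::euclidean_space \<Rightarrow> 'x::euclidean_space \<Rightarrow> real"
  assumes mf: "(\<lambda>(y,x). f y x) \<in> borel_measurable borel"
    and mf0: "(\<lambda>(y,x). f0 y x) \<in> borel_measurable borel"
    and Y: "Y \<in> sets lborel"
    and pf: "\<forall>y\<in>Y. 0 \<le> f y x" and pf0: "\<forall>y\<in>Y. 0 \<le> f0 y x"
    and if1: "(\<integral>\<^sup>+ y. ennreal (f y x) * indicator Y y \<partial>lborel) = 1"
    and if0: "(\<integral>\<^sup>+ y. ennreal (f0 y x) * indicator Y y \<partial>lborel) = 1"
    and ga: "0 \<le> ga" and gb: "0 \<le> gb" and g0: "0 \<le> g0" and eta: "\<eta> > 0" and le: "g0 \<le> \<eta> * ga"
  shows "(\<integral>\<^sup>+ y. ennreal ((sqrt (f0 y x) - sqrt (f y x))^2 * g0) * indicator Y y \<partial>lborel)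
     \<le> ennreal (4 * \<eta>) * (\<integral>\<^sup>+ y. ennreal ((sqrt (f0 y x * ga) - sqrt (f y x * gb))^2) * indicator Y y \<partial>lborel)"
proof -
  have [measurable]: "(\<lambda>y. f y x) \<in> borel_measurable lborel" "(\<lambda>y. f0 y x) \<in> borel_measurable lborel"
    using meas[OF mf] meas[OF mf0] by auto
  have [measurable]: "Y \<in> sets lborel" by fact
  define P where "P y = ennreal (ga * (sqrt (f0 y x) - sqrt (f y x))^2) * indicator Y y" for y
  define R where "R y = ennreal ((sqrt (f0 y x * ga) - sqrt (f y x * gb))^2) * indicator Y y" for y
  define E1 where "E1 y = ennreal (2*gb) * (ennreal (f y x) * indicator Y y) + ennreal (2*ga) * (ennreal (f0 y x) * indicator Y y)" for y
  define E2 where "E2 y = ennreal (2*gb) * (ennreal (f0 y x) * indicator Y y) + ennreal (2*ga) * (ennreal (f y x) * indicator Y y)" for y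
  have mP1: "P \<in> borel_measurable borel" unfolding P_def[abs_def] by measurable
  have mP2: "R \<in> borel_measurable borel" unfolding R_def[abs_def] by measurable
  have mP3: "E1 \<in> borel_measurable borel" unfolding E1_def[abs_def] by measurable
  have mP4: "E2 \<in> borel_measurable borel" unfolding E2_def[abs_def] by measurable
  note mP = mP1 mP2 mP3 mP4
  have pt: "P y + E1 y \<le> 4 * R y + E2 y" for y
  proof (cases "y \<in> Y")
    case True
    hence u: "0 \<le> f0 y x" "0 \<le> f y x" using pf pf0 by auto
    have k: "ga * (sqrt (f0 y x) - sqrt (f y x))^2 + (2*gb*f y x + 2*ga*f0 y x)
       \<le> 4 * (sqrt (f0 y x * ga) - sqrt (f y x * gb))^2 + (2*gb*f0 y x + 2*ga*f y x)"
      using key[of "sqrt ga" "sqrt gb" "sqrt (f0 y x)" "sqrt (f y x)"] u ga gb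
      by (simp add: real_sqrt_mult mult.commute mult.left_commute add.assoc)
    have "P y + E1 y = ennreal (ga * (sqrt (f0 y x) - sqrt (f y x))^2 + (2*gb*f y x + 2*ga*f0 y x))"
      unfolding P_def E1_def using True u ga gb
      by (simp add: ennreal_mult[symmetric] ennreal_plus[symmetric] del: ennreal_plus)
    also have "\<dots> \<le> ennreal (4 * (sqrt (f0 y x * ga) - sqrt (f y x * gb))^2 + (2*gb*f0 y x + 2*ga*f y x))"
      using k by (rule ennreal_leI)
    also have "\<dots> = 4 * R y + E2 y"
    proof -
      have "ennreal (4 * (sqrt (f0 y x * ga) - sqrt (f y x * gb))^2 + (2*gb*f0 y x + 2*ga*f y x))
         = ennreal (4 * (sqrt (f0 y x * ga) - sqrt (f y x * gb))^2) + ennreal (2*gb*f0 y x + 2*ga*f y x)"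
        using u ga gb by (intro ennreal_plus) auto
      also have "ennreal (4 * (sqrt (f0 y x * ga) - sqrt (f y x * gb))^2) = 4 * ennreal ((sqrt (f0 y x * ga) - sqrt (f y x * gb))^2)"
        by (simp add: ennreal_mult)
      finally show ?thesis unfolding R_def E2_def using True u ga gb
        by (simp add: ennreal_mult[symmetric] ennreal_plus[symmetric] del: ennreal_plus)
    qed
    finally show ?thesis .
  qed (simp add: P_def E1_def E2_def R_def)
  have iE1: "integral\<^sup>N lborel E1 = ennreal (2*gb) + ennreal (2*ga)"
    unfolding E1_def by (subst nn_integral_add; simp add: nn_integral_cmult if1 if0)
  have iE2: "integral\<^sup>N lborel E2 = ennreal (2*gb) + ennreal (2*ga)"
    unfolding E2_def by (subst nn_integral_add; simp add: nn_integral_cmult if1 if0)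
  have "integral\<^sup>N lborel P + integral\<^sup>N lborel E1 = (\<integral>\<^sup>+ y. P y + E1 y \<partial>lborel)"
    by (rule nn_integral_add[symmetric]) (simp_all add: mP)
  also have "\<dots> \<le> (\<integral>\<^sup>+ y. 4 * R y + E2 y \<partial>lborel)"
    using pt by (intro nn_integral_mono) auto
  also have "\<dots> = 4 * integral\<^sup>N lborel R + integral\<^sup>N lborel E2"
    by (subst nn_integral_add) (use mP in \<open>simp_all add: nn_integral_cmult\<close>)
  finally have PR: "integral\<^sup>N lborel P \<le> 4 * integral\<^sup>N lborel R"
    unfolding iE1 iE2 by (subst (asm) add.commute, subst (asm) add.commute[of "4 * _"], simp only: ennreal_add_left_cancel_le) simp
  have "(\<integral>\<^sup>+ y. ennreal ((sqrt (f0 y x) - sqrt (f y x))^2 * g0) * indicator Y y \<partial>lborel)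
      \<le> (\<integral>\<^sup>+ y. ennreal \<eta> * P y \<partial>lborel)"
  proof (intro nn_integral_mono)
    fix y
    have "(sqrt (f0 y x) - sqrt (f y x))^2 * g0 \<le> \<eta> * (ga * (sqrt (f0 y x) - sqrt (f y x))^2)"
      using mult_right_mono[OF le, of "(sqrt (f0 y x) - sqrt (f y x))^2"] by (simp add: mult.commute mult.left_commute)
    thus "ennreal ((sqrt (f0 y x) - sqrt (f y x))^2 * g0) * indicator Y y \<le> ennreal \<eta> * P y"
      unfolding P_def using eta ga
      by (cases "y \<in> Y") (auto simp: ennreal_mult[symmetric] intro!: ennreal_leI)
  qed
  also have "\<dots> = ennreal \<eta> * integral\<^sup>N lborel P"
    by (rule nn_integral_cmult) (simp add: mP)
  also have "\<dots> \<le> ennreal \<eta> * (4 * integral\<^sup>N lborel R)"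
    by (rule mult_left_mono[OF PR]) simp
  also have "\<dots> = ennreal (4 * \<eta>) * integral\<^sup>N lborel R"
    using eta by (simp add: ennreal_mult mult.commute mult.left_commute)
  finally show ?thesis unfolding R_def .
qed
lemma meas2: assumes "(\<lambda>(y,x). f y x) \<in> borel_measurable borel"
  shows "(\<lambda>(x,y). (f::'y::euclidean_space\<Rightarrow>'x::euclidean_space\<Rightarrow>real) y x) \<in> borel_measurable (borel \<Otimes>\<^sub>M borel)"
proof -
  have [measurable]: "(\<lambda>(y,x). f y x) \<in> borel_measurable (borel \<Otimes>\<^sub>M borel)" using assms by (simp add: borel_prod)
  show ?thesis by measurable
qed

theorem corollary3:
  fixes Y :: "('y::euclidean_space) set" and X :: "('x::euclidean_space) set"
    and f f0 :: "'y \<Rightarrow> 'x \<Rightarrow> real" and g g0 g0bar :: "'x \<Rightarrow> real" and \<eta> :: real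
  assumes "Y \<in> sets lborel" and "X \<in> sets lborel"
    and "f \<in> cond_dens_class Y X" and "f0 \<in> cond_dens_class Y X"
    and "is_density_on X g" and "is_density_on X g0bar" and "is_density_on X g0"
    and "\<eta> > 0" and "\<forall>x\<in>X. \<eta> * g0bar x \<ge> g0 x"
  shows "ennreal ((hellinger_dist Y X g0 f0 f)\<^sup>2) \<le>
    ennreal (4 * \<eta>) *
    (\<integral>\<^sup>+ x. (\<integral>\<^sup>+ y. ennreal ((sqrt (f0 y x * g0bar x) - sqrt (f y x * g x))\<^sup>2)
                 * indicator Y y \<partial>lborel) * indicator X x \<partial>lborel)"
proof -
  note A = assms(3-7)[unfolded cond_dens_class_def is_density_on_def, simplified]
  have mf[measurable]: "(\<lambda>(y,x). f y x) \<in> borel_measurable borel" using A by blast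
  have mf0[measurable]: "(\<lambda>(y,x). f0 y x) \<in> borel_measurable borel" using A by blast
  have mg[measurable]: "g \<in> borel_measurable borel" "g0bar \<in> borel_measurable borel" using A by blast+
  have mf2[measurable]: "(\<lambda>(x,y). f y x) \<in> borel_measurable (borel \<Otimes>\<^sub>M borel)" "(\<lambda>(x,y). f0 y x) \<in> borel_measurable (borel \<Otimes>\<^sub>M borel)"
    using meas2[OF mf] meas2[OF mf0] by auto
  have [measurable]: "Y \<in> sets borel" "X \<in> sets borel" using assms(1,2) by auto
  define I where "I = (\<integral>\<^sup>+ x. (\<integral>\<^sup>+ y. ennreal ((sqrt (f0 y x) - sqrt (f y x))\<^sup>2 * g0 x) * indicator Y y \<partial>lborel)
          * indicator X x \<partial>lborel)"
  define T where "T x = (\<integral>\<^sup>+ y. ennreal ((sqrt (f0 y x * g0bar x) - sqrt (f y x * g x))\<^sup>2)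
                 * indicator Y y \<partial>lborel)" for x
  have mT: "(\<lambda>x. T x * indicator X x) \<in> borel_measurable lborel"
  proof -
    have "(\<lambda>(x,y). ennreal ((sqrt (f0 y x * g0bar x) - sqrt (f y x * g x))\<^sup>2) * indicator Y y)
       \<in> borel_measurable (borel \<Otimes>\<^sub>M borel :: ('x \<times> 'y) measure)"
      by measurable
    hence "(\<lambda>(x,y). ennreal ((sqrt (f0 y x * g0bar x) - sqrt (f y x * g x))\<^sup>2) * indicator Y y)
       \<in> borel_measurable (lborel \<Otimes>\<^sub>M lborel :: ('x \<times> 'y) measure)"
      by (simp add: lborel_prod borel_prod)
    from lborel.borel_measurable_nn_integral[OF this] have "T \<in> borel_measurable lborel"
      unfolding T_def[abs_def] by simp
    thus ?thesis using assms(2) by measurable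
  qed
  have "(hellinger_dist Y X g0 f0 f)\<^sup>2 = enn2real I"
    unfolding hellinger_dist_def I_def by simp
  hence "ennreal ((hellinger_dist Y X g0 f0 f)\<^sup>2) \<le> I"
    by (cases "I = \<infinity>") (auto simp: ennreal_enn2real_if)
  also have "I \<le> (\<integral>\<^sup>+ x. ennreal (4 * \<eta>) * (T x * indicator X x) \<partial>lborel)"
    unfolding I_def
  proof (intro nn_integral_mono)
    fix x
    show "(\<integral>\<^sup>+ y. ennreal ((sqrt (f0 y x) - sqrt (f y x))\<^sup>2 * g0 x) * indicator Y y \<partial>lborel) * indicator X x
       \<le> ennreal (4 * \<eta>) * (T x * indicator X x)"
    proof (cases "x \<in> X")
      case True
      have "(\<integral>\<^sup>+ y. ennreal ((sqrt (f0 y x) - sqrt (f y x))\<^sup>2 * g0 x) * indicator Y y \<partial>lborel)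
         \<le> ennreal (4 * \<eta>) * T x"
        unfolding T_def
        by (rule inner[OF mf mf0 assms(1)]) (use A True assms(8,9) in auto)
      thus ?thesis using True by simp
    qed simp
  qed
  also have "\<dots> = ennreal (4 * \<eta>) * (\<integral>\<^sup>+ x. T x * indicator X x \<partial>lborel)"
    by (rule nn_integral_cmult[OF mT])
  finally show ?thesis unfolding T_def .
qed
end
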